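(* Let $r$ be an extended regular expression and $\mathfrak L=\mathrm{next}(r)$. Then (1) for every $A\in\mathfrak L$ and all $a,b\in A$: $\llbracket\partial_a(r)\rrbracket=\llbracket\partial_b(r)\rrbracket$; (2) for every $a\in\Sigma$ with $a\notin\bigcup\mathfrak L$: $\llbracket\partial_a(r)\rrbracket=\emptyset$.
   Context: $\Sigma$ is a countable (possibly infinite) alphabet, $\Sigma^*$ the set of finite words, $\epsilon$ the empty word. Literals are sets of symbols drawn from a fixed family $U\subseteq\mathcal P(\Sigma)$ containing $\emptyset$, $\Sigma$ and all singletons and closed under union, intersection and complement $\overline{A}=\Sigma\setminus A$. Extended regular expressions (EREs) are generated by $r,s ::= \epsilon \mid A \mid r+s \mid r\cdot s \mid r^* \mid r\,\&\,s \mid \neg r$ with $A$ a literal; the empty literal is written $\emptyset$. Semantics: $\llbracket\epsilon\rrbracket=\{\epsilon\}$, $\llbracket A\rrbracket=A$, $\llbracket r+s\rrbracket=\llbracket r\rrbracket\cup\llbracket s\rrbracket$, $\llbracket r\cdot s\rrbracket$ the concatenation, $\llbracket r^*\rrbracket=\llbracket r\rrbracket^*$, $\llbracket r\&s\rrbracket=\llbracket r\rrbracket\cap\llbracket s\rrbracket$, $\llbracket\neg r\rrbracket=\Sigma^*\setminus\llbracket r\rrbracket$. Nullability: $\nu(\epsilon)=\nu(r^* )=\mathit{true}$, $\nu(A)=\mathit{false}$, $\nu(r+s)=\nu(r)\vee\nu(s)$, $\nu(r\cdot s)=\nu(r\&s)=\nu(r)\wedge\nu(s)$, $\nu(\neg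 r)=\neg\nu(r)$. Brzozowski derivative for $a\in\Sigma$: $\partial_a(\epsilon)=\emptyset$; $\partial_a(A)=\epsilon$ if $a\in A$, else $\emptyset$; $\partial_a(r+s)=\partial_a(r)+\partial_a(s)$; $\partial_a(r\cdot s)=\partial_a(r)\cdot s+\partial_a(s)$ if $\nu(r)$, and $\partial_a(r)\cdot s$ otherwise; $\partial_a(r^* )=\partial_a(r)\cdot r^*$; $\partial_a(r\&s)=\partial_a(r)\&\partial_a(s)$; $\partial_a(\neg r)=\neg\partial_a(r)$. Join of sets of pairwise disjoint literals: $\mathfrak L_1\Join\mathfrak L_2=\{A_1\cap A_2,\ A_1\cap\overline{\bigcup\mathfrak L_2},\ \overline{\bigcup\mathfrak L_1}\cap A_2 \mid A_1\in\mathfrak L_1, A_2\in\mathfrak L_2\}$; also $\mathfrak L_1\sqcap\mathfrak L_2=\{A_1\cap A_2\mid A_1\in\mathfrak L_1,A_2\in\mathfrak L_2\}$. Next literals: $\mathrm{next}(\epsilon)=\{\emptyset\}$; $\mathrm{next}(A)=\{A\}$; $\mathrm{next}(r+s)=\mathrm{next}(r)\Join\mathrm{next}(s)$; $\mathrm{next}(r\cdot s)=\mathrm{next}(r)\Join\mathrm{next}(s)$ if $\nu(r)$ and $\mathrm{next}(r)$ otherwise; $\mathrm{next}(r^* )=\mathrm{next}(r)$; $\mathrm{next}(r\&s)=\mathrm{next}(r)\sqcap\mathrm{next}(s)$; $\mathrm{next}(\neg r)=\mathrm{next}(r)\cup\{\bigcap_{A\in\mathrm{next}(r)}\overline{A}\}$.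 *)

theory Defs
  imports Main "HOL-Library.Countable"
begin

datatype 'a ere =
    Eps
  | Lit "'a set"
  | Plus "'a ere" "'a ere"
  | Conc "'a ere" "'a ere"
  | Star "'a ere"
  | Inter "'a ere" "'a ere"
  | Neg "'a ere"

fun lits :: "'a ere \<Rightarrow> 'a set set" where
  "lits Eps = {}"
| "lits (Lit A) = {A}"
| "lits (Plus r s) = lits r \<union> lits s"
| "lits (Conc r s) = lits r \<union> lits s"
| "lits (Star r) = lits r"
| "lits (Inter r s) = lits r \<union> lits s"
| "lits (Neg r) = lits r"

definition literal_family :: "'a set set \<Rightarrow> bool" where
  "literal_family U \<longleftrightarrow> {} \<in> U \<and> UNIV \<in> U \<and> (\<forall>a. {a} \<in> U) \<and>
     (\<forall>A\<in>U. \<forall>B\<in>U. A \<union> B \<in> U \<and> A \<inter> B \<in> U) \<and> (\<forall>A\<in>U. - A \<in> U)"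

definition conc :: "'a list set \<Rightarrow> 'a list set \<Rightarrow> 'a list set" where
  "conc L M = {u @ v | u v. u \<in> L \<and> v \<in> M}"

definition star :: "'a list set \<Rightarrow> 'a list set" where
  "star L = (\<Union>n. ((conc L) ^^ n) {[]})"

fun lang :: "'a ere \<Rightarrow> 'a list set" where
  "lang Eps = {[]}"
| "lang (Lit A) = {[a] | a. a \<in> A}"
| "lang (Plus r s) = lang r \<union> lang s"
| "lang (Conc r s) = conc (lang r) (lang s)"
| "lang (Star r) = star (lang r)"
| "lang (Inter r s) = lang r \<inter> lang s"
| "lang (Neg r) = - lang r"

fun nullable :: "'a ere \<Rightarrow> bool" where
  "nullable Eps = True"
| "nullable (Lit A) = False"
| "nullable (Plus r s) = (nullable r \<or> nullable s)"
| "nullable (Conc r s) = (nullable r \<and> nullable s)"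
| "nullable (Star r) = True"
| "nullable (Inter r s) = (nullable r \<and> nullable s)"
| "nullable (Neg r) = (\<not> nullable r)"

fun deriv :: "'a \<Rightarrow> 'a ere \<Rightarrow> 'a ere" where
  "deriv a Eps = Lit {}"
| "deriv a (Lit A) = (if a \<in> A then Eps else Lit {})"
| "deriv a (Plus r s) = Plus (deriv a r) (deriv a s)"
| "deriv a (Conc r s) =
     (if nullable r then Plus (Conc (deriv a r) s) (deriv a s) else Conc (deriv a r) s)"
| "deriv a (Star r) = Conc (deriv a r) (Star r)"
| "deriv a (Inter r s) = Inter (deriv a r) (deriv a s)"
| "deriv a (Neg r) = Neg (deriv a r)"

definition join :: "'a set set \<Rightarrow> 'a set set \<Rightarrow> 'a set set" where
  "join L1 L2 =
     {A1 \<inter> A2 | A1 A2. A1 \<in> L1 \<and> A2 \<in> L2} \<union>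
     {A1 \<inter> - \<Union>L2 | A1 A2. A1 \<in> L1 \<and> A2 \<in> L2} \<union>
     {- \<Union>L1 \<inter> A2 | A1 A2. A1 \<in> L1 \<and> A2 \<in> L2}"

definition meet :: "'a set set \<Rightarrow> 'a set set \<Rightarrow> 'a set set" where
  "meet L1 L2 = {A1 \<inter> A2 | A1 A2. A1 \<in> L1 \<and> A2 \<in> L2}"

fun next_lits :: "'a ere \<Rightarrow> 'a set set" where
  "next_lits Eps = {{}}"
| "next_lits (Lit A) = {A}"
| "next_lits (Plus r s) = join (next_lits r) (next_lits s)"
| "next_lits (Conc r s) =
     (if nullable r then join (next_lits r) (next_lits s) else next_lits r)"
| "next_lits (Star r) = next_lits r"
| "next_lits (Inter r s) = meet (next_lits r) (next_lits s)"
| "next_lits (Neg r) = next_lits r \<union> {\<Inter>A\<in>next_lits r. - A}"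

end

theory Submission
  imports Defs
begin

lemma next_ne: "next_lits r \<noteq> {}"
  by (induction r) (auto simp: join_def meet_def)

lemma conc_empty[simp]: "conc {} M = {}" by (simp add: conc_def)

lemma join_case:
  assumes "A \<in> join L1 L2" "a \<in> A" "b \<in> A"
   and "\<forall>A\<in>L1. \<forall>a\<in>A. \<forall>b\<in>A. f a = f b" "\<forall>a. a \<notin> \<Union>L1 \<longrightarrow> f a = {}"
   and "\<forall>A\<in>L2. \<forall>a\<in>A. \<forall>b\<in>A. g a = g b" "\<forall>a. a \<notin> \<Union>L2 \<longrightarrow> g a = {}"
  shows "f a \<union> g a = f b \<union> g b"
proof -
  from assms(1) consider (i) A1 A2 where "A1 \<in> L1" "A2 \<in> L2" "A = A1 \<inter> A2"
    | (ii) A1 where "A1 \<in> L1" "A = A1 \<inter> - \<Union>L2"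
    | (iii) A2 where "A2 \<in> L2" "A = - \<Union>L1 \<inter> A2"
    unfolding join_def by blast
  then show ?thesis
  proof cases
    case i then show ?thesis using assms(2-7) by (metis IntD1 IntD2)
  next
    case ii
    then have "f a = f b" "g a = {}" "g b = {}" using assms(2-7) by auto
    then show ?thesis by simp
  next
    case iii
    then have "g a = g b" "f a = {}" "f b = {}" using assms(2-7) by auto
    then show ?thesis by simp
  qed
qed

lemma join_out:
  assumes "a \<notin> \<Union>(join L1 L2)" "L1 \<noteq> {}" "L2 \<noteq> {}"
  shows "a \<notin> \<Union>L1 \<and> a \<notin> \<Union>L2"
proof -
  obtain B1 where B1: "B1 \<in> L1" using assms(2) by blast
  obtain B2 where B2: "B2 \<in> L2" using assms(3) by blast
  have "A1 \<inter> A2 \<in> join L1 L2" if "A1 \<in> L1" "A2 \<in> L2" for A1 A2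
    using that unfolding join_def by blast
  moreover have "A1 \<inter> - \<Union>L2 \<in> join L1 L2" if "A1 \<in> L1" for A1
    using that B2 unfolding join_def by blast
  moreover have "- \<Union>L1 \<inter> A2 \<in> join L1 L2" if "A2 \<in> L2" for A2
    using that B1 unfolding join_def by blast
  ultimately show ?thesis using assms(1) by blast
qed

definition P :: "'a ere \<Rightarrow> bool" where
  "P r \<longleftrightarrow> (\<forall>A\<in>next_lits r. \<forall>a\<in>A. \<forall>b\<in>A. lang (deriv a r) = lang (deriv b r))
   \<and> (\<forall>a. a \<notin> \<Union>(next_lits r) \<longrightarrow> lang (deriv a r) = {})"

lemma P_D1: "P r \<Longrightarrow> \<forall>A\<in>next_lits r. \<forall>a\<in>A. \<forall>b\<in>A. lang (deriv a r) = lang (deriv b r)"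
  unfolding P_def by (rule conjunct1)
lemma P_D2: "P r \<Longrightarrow> \<forall>a. a \<notin> \<Union>(next_lits r) \<longrightarrow> lang (deriv a r) = {}"
  unfolding P_def by (rule conjunct2)

lemma main: "P r"
proof (induction r)
  case Eps
  then show ?case by (simp add: P_def)
next
  case (Lit x)
  then show ?case by (simp add: P_def)
next
  case (Plus r s)
  have ner: "next_lits r \<noteq> {}" and nes: "next_lits s \<noteq> {}" by (rule next_ne)+
  have I1: "\<forall>A\<in>next_lits r. \<forall>a\<in>A. \<forall>b\<in>A. lang (deriv a r) = lang (deriv b r)"
   and I2: "\<forall>a. a \<notin> \<Union>(next_lits r) \<longrightarrow> lang (deriv a r) = {}"
   and I3: "\<forall>A\<in>next_lits s. \<forall>a\<in>A. \<forall>b\<in>A. lang (deriv a s) = lang (deriv b s)"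
   and I4: "\<forall>a. a \<notin> \<Union>(next_lits s) \<longrightarrow> lang (deriv a s) = {}"
    using P_D1[OF Plus.IH(1)] P_D2[OF Plus.IH(1)] P_D1[OF Plus.IH(2)] P_D2[OF Plus.IH(2)] by -
  show ?case unfolding P_def
  proof (intro conjI ballI allI impI)
    fix A a b assume "A \<in> next_lits (Plus r s)" "a \<in> A" "b \<in> A"
    then have "A \<in> join (next_lits r) (next_lits s)" by simp
    from join_case[OF this \<open>a \<in> A\<close> \<open>b \<in> A\<close> I1 I2 I3 I4]
    show "lang (deriv a (Plus r s)) = lang (deriv b (Plus r s))" by simp
  next
    fix a assume "a \<notin> \<Union> (next_lits (Plus r s))"
    then have "a \<notin> \<Union> (join (next_lits r) (next_lits s))" by simp
    from join_out[OF this ner nes] I2 I4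
    show "lang (deriv a (Plus r s)) = {}" by simp
  qed
next
  case (Conc r s)
  have ner: "next_lits r \<noteq> {}" and nes: "next_lits s \<noteq> {}" by (rule next_ne)+
  have I1: "\<forall>A\<in>next_lits r. \<forall>a\<in>A. \<forall>b\<in>A. lang (deriv a r) = lang (deriv b r)"
   and I2: "\<forall>a. a \<notin> \<Union>(next_lits r) \<longrightarrow> lang (deriv a r) = {}"
   and I3: "\<forall>A\<in>next_lits s. \<forall>a\<in>A. \<forall>b\<in>A. lang (deriv a s) = lang (deriv b s)"
   and I4: "\<forall>a. a \<notin> \<Union>(next_lits s) \<longrightarrow> lang (deriv a s) = {}"
    using P_D1[OF Conc.IH(1)] P_D2[OF Conc.IH(1)] P_D1[OF Conc.IH(2)] P_D2[OF Conc.IH(2)] by -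
  have J1: "\<forall>A\<in>next_lits r. \<forall>a\<in>A. \<forall>b\<in>A. conc (lang (deriv a r)) (lang s) = conc (lang (deriv b r)) (lang s)"
  proof (intro ballI)
    fix A a b assume "A \<in> next_lits r" "a \<in> A" "b \<in> A"
    then have "lang (deriv a r) = lang (deriv b r)" using I1 by blast
    then show "conc (lang (deriv a r)) (lang s) = conc (lang (deriv b r)) (lang s)" by (rule arg_cong)
  qed
  have J2: "\<forall>a. a \<notin> \<Union>(next_lits r) \<longrightarrow> conc (lang (deriv a r)) (lang s) = {}"
    using I2 by simp
  show ?case
  proof (cases "nullable r")
    case True
    show ?thesis unfolding P_def
    proof (intro conjI ballI allI impI)
      fix A a b assume "A \<in> next_lits (Conc r s)" "a \<in> A" "b \<in> A"
      then have "A \<in> join (next_lits r) (next_lits s)" using True by simp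
      from join_case[OF this \<open>a \<in> A\<close> \<open>b \<in> A\<close> J1 J2 I3 I4]
      show "lang (deriv a (Conc r s)) = lang (deriv b (Conc r s))" using True by simp
    next
      fix a assume "a \<notin> \<Union> (next_lits (Conc r s))"
      then have "a \<notin> \<Union> (join (next_lits r) (next_lits s))" using True by simp
      from join_out[OF this ner nes] J2 I4
      show "lang (deriv a (Conc r s)) = {}" using True by simp
    qed
  next
    case False
    show ?thesis unfolding P_def
    proof (intro conjI ballI allI impI)
      fix A a b assume "A \<in> next_lits (Conc r s)" "a \<in> A" "b \<in> A"
      then have "A \<in> next_lits r" using False by simp
      then have "conc (lang (deriv a r)) (lang s) = conc (lang (deriv b r)) (lang s)"
        using J1 \<open>a \<in> A\<close> \<open>b \<in> A\<close> by blast
      then show "lang (deriv a (Conc r s)) = lang (deriv b (Conc r s))"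
        using False by simp
    next
      fix a assume "a \<notin> \<Union> (next_lits (Conc r s))"
      then show "lang (deriv a (Conc r s)) = {}" using False J2 by simp
    qed
  qed
next
  case (Star r)
  have I1: "\<forall>A\<in>next_lits r. \<forall>a\<in>A. \<forall>b\<in>A. lang (deriv a r) = lang (deriv b r)"
   and I2: "\<forall>a. a \<notin> \<Union>(next_lits r) \<longrightarrow> lang (deriv a r) = {}"
    using P_D1[OF Star.IH] P_D2[OF Star.IH] by -
  show ?case unfolding P_def
  proof (intro conjI ballI allI impI)
    fix A a b assume "A \<in> next_lits (Star r)" "a \<in> A" "b \<in> A"
    then have "A \<in> next_lits r" by simp
    then have "lang (deriv a r) = lang (deriv b r)" using I1 \<open>a \<in> A\<close> \<open>b \<in> A\<close> by blast
    then show "lang (deriv a (Star r)) = lang (deriv b (Star r))" by simp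
  next
    fix a assume "a \<notin> \<Union> (next_lits (Star r))"
    then have "lang (deriv a r) = {}" using I2 by simp
    then show "lang (deriv a (Star r)) = {}" by simp
  qed
next
  case (Inter r s)
  have I1: "\<forall>A\<in>next_lits r. \<forall>a\<in>A. \<forall>b\<in>A. lang (deriv a r) = lang (deriv b r)"
   and I2: "\<forall>a. a \<notin> \<Union>(next_lits r) \<longrightarrow> lang (deriv a r) = {}"
   and I3: "\<forall>A\<in>next_lits s. \<forall>a\<in>A. \<forall>b\<in>A. lang (deriv a s) = lang (deriv b s)"
   and I4: "\<forall>a. a \<notin> \<Union>(next_lits s) \<longrightarrow> lang (deriv a s) = {}"
    using P_D1[OF Inter.IH(1)] P_D2[OF Inter.IH(1)] P_D1[OF Inter.IH(2)] P_D2[OF Inter.IH(2)] by -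
  show ?case unfolding P_def
  proof (intro conjI ballI allI impI)
    fix A a b assume "A \<in> next_lits (Inter r s)" "a \<in> A" "b \<in> A"
    then obtain A1 A2 where "A1 \<in> next_lits r" "A2 \<in> next_lits s" "A = A1 \<inter> A2"
      unfolding next_lits.simps meet_def by blast
    moreover have "a \<in> A1" "b \<in> A1" "a \<in> A2" "b \<in> A2"
      using \<open>A = A1 \<inter> A2\<close> \<open>a \<in> A\<close> \<open>b \<in> A\<close> by blast+
    ultimately have "lang (deriv a r) = lang (deriv b r)" "lang (deriv a s) = lang (deriv b s)"
      using I1 I3 by (meson, meson)
    then show "lang (deriv a (Inter r s)) = lang (deriv b (Inter r s))" by simp
  next
    fix a assume a: "a \<notin> \<Union> (next_lits (Inter r s))"
    have "a \<notin> \<Union> (next_lits r) \<or> a \<notin> \<Union> (next_lits s)"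
    proof (rule ccontr)
      assume "\<not> ?thesis"
      then obtain A1 A2 where "A1 \<in> next_lits r" "A2 \<in> next_lits s" "a \<in> A1" "a \<in> A2" by blast
      then have "a \<in> \<Union> (meet (next_lits r) (next_lits s))" unfolding meet_def by blast
      then show False using a by simp
    qed
    then show "lang (deriv a (Inter r s)) = {}"
    proof
      assume "a \<notin> \<Union> (next_lits r)"
      then have "lang (deriv a r) = {}" using I2 by blast
      then show ?thesis by simp
    next
      assume "a \<notin> \<Union> (next_lits s)"
      then have "lang (deriv a s) = {}" using I4 by blast
      then show ?thesis by simp
    qed
  qed
next
  case (Neg r)
  have I1: "\<forall>A\<in>next_lits r. \<forall>a\<in>A. \<forall>b\<in>A. lang (deriv a r) = lang (deriv b r)"
   and I2: "\<forall>a. a \<notin> \<Union>(next_lits r) \<longrightarrow> lang (deriv a r) = {}"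
    using P_D1[OF Neg.IH] P_D2[OF Neg.IH] by -
  show ?case unfolding P_def
  proof (intro conjI ballI allI impI)
    fix A a b assume A: "A \<in> next_lits (Neg r)" "a \<in> A" "b \<in> A"
    have "lang (deriv a r) = lang (deriv b r)"
    proof (cases "A \<in> next_lits r")
      case True
      then show ?thesis using I1 A by blast
    next
      case False
      then have "A = (\<Inter>A\<in>next_lits r. - A)" using A by simp
      then have "a \<notin> \<Union> (next_lits r)" "b \<notin> \<Union> (next_lits r)" using A by blast+
      then show ?thesis using I2 by simp
    qed
    then show "lang (deriv a (Neg r)) = lang (deriv b (Neg r))" by simp
  next
    fix a assume a: "a \<notin> \<Union> (next_lits (Neg r))"
    have "a \<in> (\<Inter>A\<in>next_lits r. - A) \<or> a \<in> \<Union> (next_lits r)" by blast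
    then have "a \<in> \<Union> (next_lits (Neg r))" by auto
    then show "lang (deriv a (Neg r)) = {}" using a by blast
  qed
qed

theorem lemma3:
  fixes r :: "'a::countable ere" and U :: "'a set set"
  assumes "literal_family U" and "lits r \<subseteq> U"
  shows "(\<forall>A\<in>next_lits r. \<forall>a\<in>A. \<forall>b\<in>A. lang (deriv a r) = lang (deriv b r))
       \<and> (\<forall>a. a \<notin> \<Union>(next_lits r) \<longrightarrow> lang (deriv a r) = {})"
  using main[of r] unfolding P_def .

end
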